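(* Consider a system in which all tasks have the same period, $\tau_X=\tau$ for all $X\in S$. If the system is strictly feasible, then it is fulfilled by the Greedy Maximizer policy.
   Context: A system consists of a finite set $S$ of tasks. Time is slotted, $t\in\{0,1,2,\dots\}$. Each task $X\in S$ has a period $\tau_X$ (a positive integer); time is partitioned into consecutive periods of $X$ of $\tau_X$ slots each, the first starting at $t=0$, and in each period $X$ has one job, removed at the end of the period. Let $T=\mathrm{lcm}\{\tau_X : X\in S\}$; time is partitioned into consecutive frames of $T$ slots each, the $k$-th frame ($k=1,2,\dots$) being the $k$-th such block starting from $t=0$. A scheduling policy chooses in each slot either to idle or to execute the job of exactly one task. Each task $X$ has rewards $r^1_X\ge r^2_X\ge\dots\ge r^{\tau_X}_X\ge 0$: executing the job of $X$ for the $i$-th time within a period yields reward $r^i_X$ to $X$. Let $s_X(t)$ be the total reward obtained by $X$ between time 0 and $t$; the average reward is $q_X=\liminf_{t\to\infty}s_X(t)/(t/T)$. Each task has a minimum requirement $q^*_X>0$; a policy fulfills the system if $q_X\ge q^*_X$ with probability 1 for all $X\in S$. The system is feasible if some policy fulfills it, and strictly feasible if there is $\epsilon>0$ such that the same system with requirements $[(1+\epsilon)q^*_X]$ is feasible. Let $\tilde q_X(k)$ be the total reward obtained by $X$ during the $k$-th frame. The debt of $X$ is $d_X(0)=0$, $d_X(k)=[d_X(k-1)+q^*_X-\tilde q_X(k)]^+$ for $k>0$, with $[x]^+=\max\{x,0\}$. The Greedy Maximizer policy is the following: at the start of each frame the debts are updated by the recursion above (initially all debts are $0$); during the frame, in each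 time slot, letting $i_X$ denote the number of times the job of $X$ has already been executed in its current period (reset to $0$ at the start of each period of $X$), the policy executes the job of a task $Y\in S$ maximizing $r^{i_Y+1}_Y\,d_Y$ over $X\in S$ (using the current debts $d_X$), with ties broken arbitrarily. *)

theory Defs
  imports "HOL-Probability.Probability"
begin

text \<open>Tasks have type 'x; the system is a finite set S of tasks.
  tau X is the period of X, r X i is the reward r^i_X (meaningful for 1 \<le> i \<le> tau X),
  q X is the requirement q^*_X. A schedule is a sequence sch :: nat \<Rightarrow> 'x option,
  where sch t = Some X means the job of X is executed in slot t and None means idle.\<close>

definition exec_before :: "('x \<Rightarrow> nat) \<Rightarrow> (nat \<Rightarrow> 'x option) \<Rightarrow> 'x \<Rightarrow> nat \<Rightarrow> nat" where
  "exec_before tau sch X t =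
     card {s. (t div tau X) * tau X \<le> s \<and> s < t \<and> sch s = Some X}"

definition slot_reward :: "('x \<Rightarrow> nat) \<Rightarrow> ('x \<Rightarrow> nat \<Rightarrow> real) \<Rightarrow> (nat \<Rightarrow> 'x option) \<Rightarrow> 'x \<Rightarrow> nat \<Rightarrow> real" where
  "slot_reward tau r sch X t =
     (if sch t = Some X then r X (exec_before tau sch X t + 1) else 0)"

definition cum_reward :: "('x \<Rightarrow> nat) \<Rightarrow> ('x \<Rightarrow> nat \<Rightarrow> real) \<Rightarrow> (nat \<Rightarrow> 'x option) \<Rightarrow> 'x \<Rightarrow> nat \<Rightarrow> real" where
  "cum_reward tau r sch X t = (\<Sum>s<t. slot_reward tau r sch X s)"

definition frame_len :: "'x set \<Rightarrow> ('x \<Rightarrow> nat) \<Rightarrow> nat" where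
  "frame_len S tau = Lcm (tau ` S)"

definition avg_reward :: "'x set \<Rightarrow> ('x \<Rightarrow> nat) \<Rightarrow> ('x \<Rightarrow> nat \<Rightarrow> real) \<Rightarrow> (nat \<Rightarrow> 'x option) \<Rightarrow> 'x \<Rightarrow> ereal" where
  "avg_reward S tau r sch X =
     liminf (\<lambda>t. ereal (cum_reward tau r sch X t / (real t / real (frame_len S tau))))"

definition frame_reward :: "'x set \<Rightarrow> ('x \<Rightarrow> nat) \<Rightarrow> ('x \<Rightarrow> nat \<Rightarrow> real) \<Rightarrow> (nat \<Rightarrow> 'x option) \<Rightarrow> 'x \<Rightarrow> nat \<Rightarrow> real" where
  "frame_reward S tau r sch X k =
     (\<Sum>s\<in>{(k - 1) * frame_len S tau ..< k * frame_len S tau}. slot_reward tau r sch X s)"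

primrec debt :: "'x set \<Rightarrow> ('x \<Rightarrow> nat) \<Rightarrow> ('x \<Rightarrow> nat \<Rightarrow> real) \<Rightarrow> ('x \<Rightarrow> real) \<Rightarrow> (nat \<Rightarrow> 'x option) \<Rightarrow> 'x \<Rightarrow> nat \<Rightarrow> real" where
  "debt S tau r q sch X 0 = 0"
| "debt S tau r q sch X (Suc k) =
     max 0 (debt S tau r q sch X k + q X - frame_reward S tau r sch X (Suc k))"

definition valid_schedule :: "'x set \<Rightarrow> (nat \<Rightarrow> 'x option) \<Rightarrow> bool" where
  "valid_schedule S sch \<longleftrightarrow> (\<forall>t X. sch t = Some X \<longrightarrow> X \<in> S)"

definition meets_requirements :: "'x set \<Rightarrow> ('x \<Rightarrow> nat) \<Rightarrow> ('x \<Rightarrow> nat \<Rightarrow> real) \<Rightarrow> ('x \<Rightarrow> real) \<Rightarrow> (nat \<Rightarrow> 'x option) \<Rightarrow> bool" where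
  "meets_requirements S tau r q sch \<longleftrightarrow> (\<forall>X\<in>S. avg_reward S tau r sch X \<ge> ereal (q X))"

text \<open>Feasibility: some (possibly randomized, history dependent) policy fulfills the system
  with probability 1. Since the system itself is deterministic, a policy is represented by the
  probability distribution it induces on schedules.\<close>
definition feasible :: "'x set \<Rightarrow> ('x \<Rightarrow> nat) \<Rightarrow> ('x \<Rightarrow> nat \<Rightarrow> real) \<Rightarrow> ('x \<Rightarrow> real) \<Rightarrow> bool" where
  "feasible S tau r q \<longleftrightarrow>
     (\<exists>M :: (nat \<Rightarrow> 'x option) measure. prob_space M \<and>
        (AE sch in M. valid_schedule S sch \<and> meets_requirements S tau r q sch))"

definition strictly_feasible :: "'x set \<Rightarrow> ('x \<Rightarrow> nat) \<Rightarrow> ('x \<Rightarrow> nat \<Rightarrow> real) \<Rightarrow> ('x \<Rightarrow> real) \<Rightarrow> bool" where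
  "strictly_feasible S tau r q \<longleftrightarrow> (\<exists>\<epsilon>>0. feasible S tau r (\<lambda>X. (1 + \<epsilon>) * q X))"

text \<open>A schedule produced by the Greedy Maximizer (for some tie-breaking): in every slot t it
  executes a task Y in S maximizing r^{i_Y+1}_Y d_Y, with the debts of the current frame,
  i.e. d(k) during frame k+1 (slots kT, ..., (k+1)T-1).\<close>
definition greedy_maximizer :: "'x set \<Rightarrow> ('x \<Rightarrow> nat) \<Rightarrow> ('x \<Rightarrow> nat \<Rightarrow> real) \<Rightarrow> ('x \<Rightarrow> real) \<Rightarrow> (nat \<Rightarrow> 'x option) \<Rightarrow> bool" where
  "greedy_maximizer S tau r q sch \<longleftrightarrow>
     (\<forall>t. \<exists>Y\<in>S. sch t = Some Y \<and>
        (\<forall>X\<in>S. r X (exec_before tau sch X t + 1) * debt S tau r q sch X (t div frame_len S tau)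
               \<le> r Y (exec_before tau sch Y t + 1) * debt S tau r q sch Y (t div frame_len S tau)))"

definition fulfilled_by_GM :: "'x set \<Rightarrow> ('x \<Rightarrow> nat) \<Rightarrow> ('x \<Rightarrow> nat \<Rightarrow> real) \<Rightarrow> ('x \<Rightarrow> real) \<Rightarrow> bool" where
  "fulfilled_by_GM S tau r q \<longleftrightarrow>
     (\<forall>sch. greedy_maximizer S tau r q sch \<longrightarrow> meets_requirements S tau r q sch)"

end

theory Submission
  imports Defs
begin

lemma cnt_Suc:
  assumes "a \<le> b"
  shows "card {s. a \<le> s \<and> s < Suc b \<and> P s} = card {s. a \<le> s \<and> s < b \<and> P s} + (if P b then 1 else 0)"
proof -
  have fin: "finite {s. a \<le> s \<and> s < b \<and> P s}" by (rule finite_subset[of _ "{..<b}"]) auto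
  show ?thesis
  proof (cases "P b")
    case True
    have "{s. a \<le> s \<and> s < Suc b \<and> P s} = insert b {s. a \<le> s \<and> s < b \<and> P s}"
      using assms True by auto
    then show ?thesis using fin True by simp
  next
    case False
    have "{s. a \<le> s \<and> s < Suc b \<and> P s} = {s. a \<le> s \<and> s < b \<and> P s}"
      using assms False less_Suc_eq by auto
    then show ?thesis using False by simp
  qed
qed

lemma cnt_le: "card {s. a \<le> s \<and> s < b \<and> P s} \<le> b - a"
proof -
  have "card {s. a \<le> s \<and> s < b \<and> P s} \<le> card {a..<b}"
    by (rule card_mono) auto
  then show ?thesis by simp
qed

lemma exec_before_less:
  assumes "tau X > 0"
  shows "exec_before tau sch X t < tau X"
proof -
  have "exec_before tau sch X t \<le> t - (t div tau X) * tau X"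
    unfolding exec_before_def by (rule cnt_le)
  also have "\<dots> = t mod tau X" by (simp add: minus_div_mult_eq_mod)
  also have "\<dots> < tau X" using assms by simp
  finally show ?thesis .
qed

lemma slot_reward_nonneg:
  assumes "tau X > 0" "\<forall>i. 1 \<le> i \<longrightarrow> i \<le> tau X \<longrightarrow> 0 \<le> r X i"
  shows "0 \<le> slot_reward tau r sch X t"
  using exec_before_less[of tau X sch t] assms
  unfolding slot_reward_def by auto

lemma frame_sum:
  assumes "tau X = T" "T > 0" "j \<le> T"
  shows "(\<Sum>s\<in>{k*T..<k*T+j}. slot_reward tau r sch X s)
       = (\<Sum>i < card {s. k*T \<le> s \<and> s < k*T+j \<and> sch s = Some X}. r X (Suc i))"
  using assms(3)
proof (induction j)
  case 0
  have "{s. k * T \<le> s \<and> s < k * T \<and> sch s = Some X} = {}" by auto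
  then show ?case by (simp only: add_0_right card.empty) simp
next
  case (Suc j)
  have jT: "j < T" using Suc.prems by simp
  have dv: "(k*T+j) div T = k" using jT assms(2) by simp
  have eb: "exec_before tau sch X (k*T+j) = card {s. k*T \<le> s \<and> s < k*T+j \<and> sch s = Some X}"
    unfolding exec_before_def using dv assms(1) by simp
  have c: "card {s. k*T \<le> s \<and> s < Suc (k*T+j) \<and> sch s = Some X}
     = card {s. k*T \<le> s \<and> s < k*T+j \<and> sch s = Some X} + (if sch (k*T+j) = Some X then 1 else 0)"
    by (rule cnt_Suc) simp
  have "(\<Sum>s\<in>{k*T..<k*T+Suc j}. slot_reward tau r sch X s)
      = (\<Sum>s\<in>{k*T..<k*T+j}. slot_reward tau r sch X s) + slot_reward tau r sch X (k*T+j)"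
    by simp
  also have "\<dots> = (\<Sum>i < card {s. k*T \<le> s \<and> s < k*T+j \<and> sch s = Some X}. r X (Suc i))
      + slot_reward tau r sch X (k*T+j)" using Suc jT by simp
  finally show ?case using c eb by (simp add: slot_reward_def)
qed

lemma greedy_opt:
  fixes w :: "'x \<Rightarrow> nat \<Rightarrow> real" and n :: "nat \<Rightarrow> 'x \<Rightarrow> nat" and m :: "'x \<Rightarrow> nat"
    and Y :: "nat \<Rightarrow> 'x"
  assumes fin: "finite S" and T: "T > 0"
    and mono: "\<forall>X\<in>S. \<forall>i j. 1 \<le> i \<longrightarrow> i \<le> j \<longrightarrow> j \<le> T \<longrightarrow> w X j \<le> w X i"
    and nonneg: "\<forall>X\<in>S. \<forall>i. 1 \<le> i \<longrightarrow> i \<le> T \<longrightarrow> 0 \<le> w X i"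
    and n0: "\<forall>X. n 0 X = 0"
    and YS: "\<forall>j<T. Y j \<in> S"
    and step: "\<forall>j<T. \<forall>X. n (Suc j) X = (if X = Y j then n j X + 1 else n j X)"
    and gr: "\<forall>j<T. \<forall>X\<in>S. w X (n j X + 1) \<le> w (Y j) (n j (Y j) + 1)"
    and mT: "\<forall>X\<in>S. m X \<le> T" and msum: "(\<Sum>X\<in>S. m X) \<le> T"
  shows "(\<Sum>X\<in>S. \<Sum>i<m X. w X (Suc i)) \<le> (\<Sum>X\<in>S. \<Sum>i<n T X. w X (Suc i))"
proof -
  have sumj: "(\<Sum>X\<in>S. n j X) = j" if "j \<le> T" for j
    using that
  proof (induction j)
    case 0 then show ?case using n0 by simp
  next
    case (Suc j)
    then have jT: "j < T" by simp
    have "(\<Sum>X\<in>S. n (Suc j) X) = (\<Sum>X\<in>S. n j X + (if X = Y j then 1 else 0))"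
      using step jT by (intro sum.cong) auto
    also have "\<dots> = (\<Sum>X\<in>S. n j X) + 1"
      using fin YS jT by (simp add: sum.distrib)
    finally show ?case using Suc jT by simp
  qed
  have nmono: "n j X \<le> n j' X" if "j \<le> j'" "j' \<le> T" for j j' X
    using that
  proof (induction j' rule: dec_induct)
    case base then show ?case by simp
  next
    case (step i)
    then show ?case using assms(7) by (auto simp: Suc_le_eq)
  qed
  have nle: "n j X \<le> j" if "j \<le> T" "X \<in> S" for j X
  proof -
    have "n j X \<le> (\<Sum>X\<in>S. n j X)" using fin that(2) by (intro member_le_sum) auto
    then show ?thesis using sumj[OF that(1)] by simp
  qed
  have last: "\<exists>j'<j. Y j' = X \<and> n j' X + 1 = n j X" if "j \<le> T" "n j X \<ge> 1" for j X
    using that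
  proof (induction j)
    case 0 then show ?case using n0 by simp
  next
    case (Suc j)
    then have jT: "j < T" by simp
    show ?case
    proof (cases "X = Y j")
      case True
      then show ?thesis using step jT by auto
    next
      case False
      then have "n (Suc j) X = n j X" using step jT by auto
      then show ?thesis using Suc by (metis Suc_leD less_SucI)
    qed
  qed
  define v where "v j = w (Y j) (n j (Y j) + 1)" for j
  define \<theta> where "\<theta> = Min (v ` {..<T})"
  have fne: "finite (v ` {..<T})" "v ` {..<T} \<noteq> {}" using T by auto
  obtain j0 where j0: "j0 < T" "\<theta> = v j0"
    using Min_in[OF fne] unfolding \<theta>_def by auto
  have \<theta>le: "\<theta> \<le> v j" if "j < T" for j
    unfolding \<theta>_def using fne that by (intro Min_le) auto
  have \<theta>nn: "0 \<le> \<theta>"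
  proof -
    have "n j0 (Y j0) \<le> j0" using nle j0 YS by simp
    then show ?thesis using j0 nonneg YS unfolding v_def by simp
  qed
  define N where "N = n T"
  have up: "w X i \<le> \<theta>" if "X \<in> S" "N X < i" "i \<le> T" for X i
  proof -
    have a: "n j0 X \<le> N X" unfolding N_def using j0 by (intro nmono) auto
    have "w X i \<le> w X (N X + 1)" using mono that by auto
    also have "\<dots> \<le> w X (n j0 X + 1)" using mono that a by auto
    also have "\<dots> \<le> v j0" unfolding v_def using gr j0 that by auto
    finally show ?thesis using j0 by simp
  qed
  have low: "\<theta> \<le> w X i" if h: "X \<in> S" "1 \<le> i" "i \<le> N X" for X i
  proof -
    obtain j' where j': "j' < T" "Y j' = X" "n j' X + 1 = N X"
      using last[of T X] h unfolding N_def by fastforce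
    have NT: "N X \<le> T" unfolding N_def using nle h by simp
    have "\<theta> \<le> v j'" using \<theta>le j' by simp
    also have "\<dots> = w X (N X)" using j' unfolding v_def by simp
    also have "\<dots> \<le> w X i" using mono h NT by auto
    finally show ?thesis .
  qed
  have perX: "(\<Sum>i<m X. w X (Suc i)) \<le> (\<Sum>i<N X. w X (Suc i)) + \<theta> * (real (m X) - real (N X))"
    if X: "X \<in> S" for X
  proof (cases "N X \<le> m X")
    case True
    have "(\<Sum>i<m X. w X (Suc i)) = (\<Sum>i<N X. w X (Suc i)) + (\<Sum>i\<in>{N X..<m X}. w X (Suc i))"
      using True by (metis atLeast0LessThan le0 sum.atLeastLessThan_concat)
    also have "(\<Sum>i\<in>{N X..<m X}. w X (Suc i)) \<le> of_nat (card {N X..<m X}) * \<theta>"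
      using up X mT by (intro sum_bounded_above) auto
    finally show ?thesis using True by (simp add: of_nat_diff mult.commute)
  next
    case False
    have "(\<Sum>i<N X. w X (Suc i)) = (\<Sum>i<m X. w X (Suc i)) + (\<Sum>i\<in>{m X..<N X}. w X (Suc i))"
      using False by (metis atLeast0LessThan le0 nat_le_linear sum.atLeastLessThan_concat)
    moreover have "of_nat (card {m X..<N X}) * \<theta> \<le> (\<Sum>i\<in>{m X..<N X}. w X (Suc i))"
      using low X by (intro sum_bounded_below) auto
    ultimately show ?thesis using False by (simp add: of_nat_diff mult.commute algebra_simps)
  qed
  have "(\<Sum>X\<in>S. \<Sum>i<m X. w X (Suc i)) \<le> (\<Sum>X\<in>S. (\<Sum>i<N X. w X (Suc i)) + \<theta> * (real (m X) - real (N X)))"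
    using perX by (rule sum_mono)
  also have "\<dots> = (\<Sum>X\<in>S. \<Sum>i<N X. w X (Suc i)) + \<theta> * (real (\<Sum>X\<in>S. m X) - real (\<Sum>X\<in>S. N X))"
    by (simp add: sum.distrib sum_distrib_left[symmetric] sum_subtractf)
  also have "\<dots> \<le> (\<Sum>X\<in>S. \<Sum>i<N X. w X (Suc i))"
  proof -
    have "real (\<Sum>X\<in>S. m X) - real (\<Sum>X\<in>S. N X) \<le> 0"
      using msum sumj[of T] unfolding N_def by (metis diff_le_0_iff_le of_nat_le_iff order.refl)
    then show ?thesis using \<theta>nn by (simp add: mult_nonneg_nonpos)
  qed
  finally show ?thesis unfolding N_def .
qed

lemma debt_nonneg: "0 \<le> debt S tau r q sch X k"
  by (cases k) auto

lemma frame_reward_cnt: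
  assumes "tau X = T" "T > 0" "frame_len S tau = T"
  shows "frame_reward S tau r sch X (Suc k)
       = (\<Sum>i < card {s. k*T \<le> s \<and> s < k*T+T \<and> sch s = Some X}. r X (Suc i))"
proof -
  have "frame_reward S tau r sch X (Suc k) = (\<Sum>s\<in>{k*T..<k*T+T}. slot_reward tau r sch X s)"
    unfolding frame_reward_def using assms(3) by (simp add: add.commute)
  then show ?thesis using frame_sum[of tau X T T r sch k] assms by simp
qed

lemma cnt_sum_le:
  assumes "finite S"
  shows "(\<Sum>X\<in>S. card {s. a \<le> s \<and> s < b \<and> sch s = Some X}) \<le> b - a"
proof -
  have "(\<Sum>X\<in>S. card {s. a \<le> s \<and> s < b \<and> sch s = Some X})
      = card (\<Union>X\<in>S. {s. a \<le> s \<and> s < b \<and> sch s = Some X})"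
    using assms by (intro card_UN_disjoint[symmetric]) auto
  also have "\<dots> \<le> card {a..<b}" by (rule card_mono) auto
  finally show ?thesis by simp
qed

lemma frame_opt:
  assumes fin: "finite S" and T: "T > 0" and tauT: "\<forall>X\<in>S. tau X = T" and FL: "frame_len S tau = T"
    and mono: "\<forall>X\<in>S. \<forall>i j. 1 \<le> i \<longrightarrow> i \<le> j \<longrightarrow> j \<le> tau X \<longrightarrow> r X j \<le> r X i"
    and nonneg: "\<forall>X\<in>S. \<forall>i. 1 \<le> i \<longrightarrow> i \<le> tau X \<longrightarrow> 0 \<le> r X i"
    and gm: "greedy_maximizer S tau r q sch"
  shows "(\<Sum>X\<in>S. debt S tau r q sch X k * frame_reward S tau r sch' X (Suc j))
       \<le> (\<Sum>X\<in>S. debt S tau r q sch X k * frame_reward S tau r sch X (Suc k))"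
proof -
  define d where "d X = debt S tau r q sch X k" for X
  define w where "w X i = d X * r X i" for X i
  define n where "n j' X = card {s. k*T \<le> s \<and> s < k*T+j' \<and> sch s = Some X}" for j' X
  define m where "m X = card {s. j*T \<le> s \<and> s < j*T+T \<and> sch' s = Some X}" for X
  obtain Yf where Yf: "\<forall>t. Yf t \<in> S \<and> sch t = Some (Yf t) \<and>
        (\<forall>X\<in>S. r X (exec_before tau sch X t + 1) * debt S tau r q sch X (t div frame_len S tau)
               \<le> r (Yf t) (exec_before tau sch (Yf t) t + 1) * debt S tau r q sch (Yf t) (t div frame_len S tau))"
    using gm unfolding greedy_maximizer_def by metis
  define Y where "Y j' = Yf (k*T+j')" for j'
  have dnn: "0 \<le> d X" for X unfolding d_def by (rule debt_nonneg)
  have eb: "exec_before tau sch X (k*T+j') = n j' X" if "j' < T" "X \<in> S" for j' X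
  proof -
    have "(k*T+j') div T = k" using that T by simp
    then show ?thesis unfolding exec_before_def n_def using tauT that by simp
  qed
  have dv: "(k*T+j') div frame_len S tau = k" if "j' < T" for j'
    using that T FL by simp
  have main: "(\<Sum>X\<in>S. \<Sum>i<m X. w X (Suc i)) \<le> (\<Sum>X\<in>S. \<Sum>i<n T X. w X (Suc i))"
  proof (rule greedy_opt[where Y = Y])
    show "finite S" by fact
    show "T > 0" by fact
    show "\<forall>X\<in>S. \<forall>i j. 1 \<le> i \<longrightarrow> i \<le> j \<longrightarrow> j \<le> T \<longrightarrow> w X j \<le> w X i"
      using mono tauT dnn unfolding w_def by (auto intro: mult_left_mono)
    show "\<forall>X\<in>S. \<forall>i. 1 \<le> i \<longrightarrow> i \<le> T \<longrightarrow> 0 \<le> w X i"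
      using nonneg tauT dnn unfolding w_def by auto
    show "\<forall>X. n 0 X = 0" unfolding n_def by simp
    show "\<forall>j<T. Y j \<in> S" unfolding Y_def using Yf by auto
    show "\<forall>j<T. \<forall>X. n (Suc j) X = (if X = Y j then n j X + 1 else n j X)"
    proof (intro allI impI)
      fix j' X assume "j' < T"
      have "n (Suc j') X = n j' X + (if sch (k*T+j') = Some X then 1 else 0)"
        unfolding n_def using cnt_Suc[of "k*T" "k*T+j'"] by simp
      then show "n (Suc j') X = (if X = Y j' then n j' X + 1 else n j' X)"
        unfolding Y_def using Yf by auto
    qed
    show "\<forall>j<T. \<forall>X\<in>S. w X (n j X + 1) \<le> w (Y j) (n j (Y j) + 1)"
    proof (intro allI impI ballI)
      fix j' X assume j': "j' < T" and X: "X \<in> S"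
      have YS: "Y j' \<in> S" unfolding Y_def using Yf by auto
      have "r X (exec_before tau sch X (k*T+j') + 1) * debt S tau r q sch X ((k*T+j') div frame_len S tau)
               \<le> r (Y j') (exec_before tau sch (Y j') (k*T+j') + 1) * debt S tau r q sch (Y j') ((k*T+j') div frame_len S tau)"
        using Yf X unfolding Y_def by blast
      then show "w X (n j' X + 1) \<le> w (Y j') (n j' (Y j') + 1)"
        unfolding w_def d_def using eb[OF j' X] eb[OF j' YS] dv[OF j'] by (simp add: mult.commute)
    qed
    show "\<forall>X\<in>S. m X \<le> T" unfolding m_def using cnt_le[of "j*T" "j*T+T"] by (simp add: le_trans)
    show "(\<Sum>X\<in>S. m X) \<le> T" unfolding m_def using cnt_sum_le[OF fin, of "j*T" "j*T+T" sch'] by simp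
  qed
  have e1: "frame_reward S tau r sch' X (Suc j) = (\<Sum>i<m X. r X (Suc i))" if "X \<in> S" for X
    unfolding m_def using frame_reward_cnt[OF _ T FL] tauT that by simp
  have e2: "frame_reward S tau r sch X (Suc k) = (\<Sum>i<n T X. r X (Suc i))" if "X \<in> S" for X
    unfolding n_def using frame_reward_cnt[OF _ T FL] tauT that by simp
  show ?thesis using main e1 e2 unfolding w_def d_def
    by (simp add: sum_distrib_left)
qed

lemma debt_bounded:
  fixes d g :: "'x \<Rightarrow> nat \<Rightarrow> real" and q G :: "'x \<Rightarrow> real"
  assumes fin: "finite S" and qpos: "\<forall>X\<in>S. q X > 0" and dl: "\<delta> > 0"
    and d0: "\<forall>X. d X 0 = 0"
    and dS: "\<forall>X k. d X (Suc k) = max 0 (d X k + q X - g X (Suc k))"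
    and gb: "\<forall>X\<in>S. \<forall>k. 0 \<le> g X k \<and> g X k \<le> G X"
    and drift: "\<forall>k. (1+\<delta>) * (\<Sum>X\<in>S. d X k * q X) \<le> (\<Sum>X\<in>S. d X k * g X (Suc k))"
  shows "\<exists>E. \<forall>k. \<forall>X\<in>S. d X k \<le> E"
proof (cases "S = {}")
  case True then show ?thesis by auto
next
  case nE: False
  have dnn: "0 \<le> d X k" for X k using d0 dS by (cases k) auto
  define L where "L k = (\<Sum>X\<in>S. (d X k)^2)" for k
  define P where "P k = (\<Sum>X\<in>S. d X k * q X)" for k
  define C where "C = (\<Sum>X\<in>S. (q X + G X)^2)"
  have Pnn: "0 \<le> P k" for k unfolding P_def using qpos dnn by (intro sum_nonneg) (simp add: less_imp_le)
  have one: "(d X (Suc k))^2 \<le> (d X k)^2 + 2 * (d X k * q X - d X k * g X (Suc k)) + (q X + G X)^2"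
    if X: "X \<in> S" for X k
  proof -
    let ?a = "d X k + q X - g X (Suc k)"
    have "(d X (Suc k))^2 \<le> ?a^2" using dS by (auto simp: max_def)
    also have "?a^2 = (d X k)^2 + 2 * (d X k * q X - d X k * g X (Suc k)) + (q X - g X (Suc k))^2"
      by (simp add: power2_eq_square algebra_simps)
    also have "(q X - g X (Suc k))^2 \<le> (q X + G X)^2"
    proof -
      have "0 \<le> g X (Suc k)" "g X (Suc k) \<le> G X" "0 < q X" using gb X qpos by auto
      then have "\<bar>q X - g X (Suc k)\<bar> \<le> \<bar>q X + G X\<bar>" by linarith
      then show ?thesis by (simp add: abs_le_square_iff)
    qed
    finally show ?thesis by simp
  qed
  have Lstep: "L (Suc k) \<le> L k - 2 * \<delta> * P k + C" for k
  proof -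
    have "L (Suc k) \<le> (\<Sum>X\<in>S. (d X k)^2 + 2 * (d X k * q X - d X k * g X (Suc k)) + (q X + G X)^2)"
      unfolding L_def using one by (intro sum_mono) auto
    also have "\<dots> = L k + 2 * (P k - (\<Sum>X\<in>S. d X k * g X (Suc k))) + C"
      unfolding L_def P_def C_def by (simp add: sum.distrib sum_subtractf sum_distrib_left)
    also have "\<dots> \<le> L k - 2 * \<delta> * P k + C"
      using drift[rule_format, of k] unfolding P_def by (simp add: algebra_simps)
    finally show ?thesis .
  qed
  define qm where "qm = Min (q ` S)"
  have qm: "qm > 0" "\<forall>X\<in>S. qm \<le> q X" unfolding qm_def using fin nE qpos by auto
  define D where "D = C / (2 * \<delta> * qm)"
  define B where "B = real (card S) * D^2 + C"
  have Cnn: "0 \<le> C" unfolding C_def by (simp add: sum_nonneg)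
  have Lb: "L k \<le> B" for k
  proof (induction k)
    case 0 then show ?case unfolding L_def B_def using d0 Cnn by simp
  next
    case (Suc k)
    show ?case
    proof (cases "C \<le> 2 * \<delta> * P k")
      case True
      then show ?thesis using Lstep[of k] Suc by simp
    next
      case False
      have dD: "d X k \<le> D" if X: "X \<in> S" for X
      proof -
        have "d X k * qm \<le> d X k * q X" using qm X dnn by (simp add: mult_left_mono)
        also have "\<dots> \<le> P k" unfolding P_def using X fin qpos dnn
          by (intro member_le_sum) (auto simp: less_imp_le)
        finally have h1: "d X k * qm \<le> P k" .
        have "d X k * qm * (2 * \<delta>) \<le> P k * (2 * \<delta>)" using h1 dl by (intro mult_right_mono) auto
        then have "d X k * qm * (2 * \<delta>) \<le> C" using False by (simp add: algebra_simps)
        then show ?thesis unfolding D_def using qm dl by (simp add: field_simps)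
      qed
      have "L k \<le> (\<Sum>X\<in>S. D^2)" unfolding L_def using dD dnn
        by (intro sum_mono power_mono) auto
      then have "L k \<le> real (card S) * D^2" by simp
      moreover have "2 * \<delta> * P k \<ge> 0" using Pnn dl by simp
      ultimately show ?thesis using Lstep[of k] unfolding B_def by simp
    qed
  qed
  have "d X k \<le> max 1 B" if "X \<in> S" for X k
  proof -
    have "(d X k)^2 \<le> L k" unfolding L_def using fin that by (intro member_le_sum) auto
    then have sq: "(d X k)^2 \<le> B" using Lb[of k] by simp
    show ?thesis
    proof (cases "d X k \<le> 1")
      case True then show ?thesis by simp
    next
      case False
      then have "d X k \<le> (d X k)^2" by (simp add: power2_eq_square)
      then show ?thesis using sq by simp
    qed
  qed
  then show ?thesis by blast
qed

lemma cum_frames: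
  assumes "frame_len S tau = T"
  shows "cum_reward tau r sch X (K*T) = (\<Sum>j<K. frame_reward S tau r sch X (Suc j))"
proof (induction K)
  case 0 then show ?case by (simp add: cum_reward_def)
next
  case (Suc K)
  have "cum_reward tau r sch X (Suc K * T) = cum_reward tau r sch X (K*T) + (\<Sum>s\<in>{K*T..<K*T+T}. slot_reward tau r sch X s)"
    unfolding cum_reward_def
    by (simp add: atLeast0LessThan[symmetric] sum.atLeastLessThan_concat add.commute)
  moreover have "frame_reward S tau r sch X (Suc K) = (\<Sum>s\<in>{K*T..<K*T+T}. slot_reward tau r sch X s)"
    unfolding frame_reward_def using assms by (simp add: add.commute)
  ultimately show ?case using Suc by simp
qed

lemma cum_mono:
  assumes "\<forall>s. 0 \<le> slot_reward tau r sch X s" "a \<le> b"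
  shows "cum_reward tau r sch X a \<le> cum_reward tau r sch X b"
  unfolding cum_reward_def using assms by (intro sum_mono2) auto

lemma slot_reward_le:
  assumes "tau X > 0" "\<forall>i j. 1 \<le> i \<longrightarrow> i \<le> j \<longrightarrow> j \<le> tau X \<longrightarrow> r X j \<le> r X i"
    "\<forall>i. 1 \<le> i \<longrightarrow> i \<le> tau X \<longrightarrow> 0 \<le> r X i"
  shows "slot_reward tau r sch X t \<le> r X 1"
  using exec_before_less[of tau X sch t] assms
  unfolding slot_reward_def by (auto simp: Suc_le_eq)

theorem theorem8:
  fixes S :: "'x set" and tau :: "'x \<Rightarrow> nat" and r :: "'x \<Rightarrow> nat \<Rightarrow> real"
    and q :: "'x \<Rightarrow> real" and \<tau> :: nat
  assumes "finite S"
    and "\<forall>X\<in>S. tau X > 0"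
    and "\<forall>X\<in>S. \<forall>i j. 1 \<le> i \<longrightarrow> i \<le> j \<longrightarrow> j \<le> tau X \<longrightarrow> r X j \<le> r X i"
    and "\<forall>X\<in>S. \<forall>i. 1 \<le> i \<longrightarrow> i \<le> tau X \<longrightarrow> 0 \<le> r X i"
    and "\<forall>X\<in>S. q X > 0"
    and "\<forall>X\<in>S. tau X = \<tau>"
    and "strictly_feasible S tau r q"
  shows "fulfilled_by_GM S tau r q"
  unfolding fulfilled_by_GM_def
proof (intro allI impI)
  fix sch assume gm: "greedy_maximizer S tau r q sch"
  note fin = assms(1) and taupos = assms(2) and mono = assms(3) and nonneg = assms(4)
    and qpos = assms(5) and tauT = assms(6)
  define T where "T = \<tau>"
  have nE: "S \<noteq> {}" using gm unfolding greedy_maximizer_def by auto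
  then obtain X0 where X0: "X0 \<in> S" by auto
  have T: "T > 0" using X0 taupos tauT unfolding T_def by auto
  have tS: "tau ` S = {T}" using nE tauT unfolding T_def by auto
  have FL: "frame_len S tau = T" unfolding frame_len_def tS by simp
  have tauT': "\<forall>X\<in>S. tau X = T" using tauT unfolding T_def by simp
  obtain \<epsilon> where \<epsilon>: "\<epsilon> > 0" "feasible S tau r (\<lambda>X. (1 + \<epsilon>) * q X)"
    using assms(7) unfolding strictly_feasible_def by auto
  then obtain M :: "(nat \<Rightarrow> 'x option) measure" where M: "prob_space M"
    "AE sch in M. valid_schedule S sch \<and> meets_requirements S tau r (\<lambda>X. (1 + \<epsilon>) * q X) sch"
    unfolding feasible_def by auto
  have "\<exists>s. meets_requirements S tau r (\<lambda>X. (1 + \<epsilon>) * q X) s"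
  proof (rule ccontr)
    assume "\<not> (\<exists>s. meets_requirements S tau r (\<lambda>X. (1 + \<epsilon>) * q X) s)"
    then have no: "\<forall>s. \<not> meets_requirements S tau r (\<lambda>X. (1 + \<epsilon>) * q X) s" by blast
    have "AE s in M. False" using M(2) by (rule AE_mp) (use no in auto)
    then show False using prob_space.AE_False[OF M(1)] by simp
  qed
  then obtain sch' where sch': "meets_requirements S tau r (\<lambda>X. (1 + \<epsilon>) * q X) sch'" by blast
  define \<delta> where "\<delta> = \<epsilon> / 2"
  have \<delta>: "\<delta> > 0" unfolding \<delta>_def using \<epsilon> by simp
  have ev: "\<forall>X\<in>S. eventually (\<lambda>t. ereal ((1 + \<delta>) * q X) < ereal (cum_reward tau r sch' X t / (real t / real (frame_len S tau)))) sequentially"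
  proof
    fix X assume X: "X \<in> S"
    have "ereal ((1 + \<delta>) * q X) < ereal ((1 + \<epsilon>) * q X)"
      using qpos X \<epsilon> unfolding \<delta>_def by simp
    also have "\<dots> \<le> avg_reward S tau r sch' X" using sch' X unfolding meets_requirements_def by auto
    finally show "eventually (\<lambda>t. ereal ((1 + \<delta>) * q X) < ereal (cum_reward tau r sch' X t / (real t / real (frame_len S tau)))) sequentially"
      unfolding avg_reward_def by (rule less_LiminfD)
  qed
  have "eventually (\<lambda>t. \<forall>X\<in>S. ereal ((1 + \<delta>) * q X) < ereal (cum_reward tau r sch' X t / (real t / real (frame_len S tau)))) sequentially"
    using eventually_ball_finite[OF fin ev] .
  then obtain N where N: "\<forall>t\<ge>N. \<forall>X\<in>S. (1 + \<delta>) * q X < cum_reward tau r sch' X t / (real t / real T)"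
    unfolding eventually_sequentially FL by auto
  define K where "K = Suc N"
  have K: "K > 0" unfolding K_def by simp
  define A where "A X = (\<Sum>j<K. frame_reward S tau r sch' X (Suc j)) / real K" for X
  have A: "(1 + \<delta>) * q X \<le> A X" if X: "X \<in> S" for X
  proof -
    have "K \<le> K*T" using T by simp
    then have "K*T \<ge> N" unfolding K_def by simp
    then have "(1 + \<delta>) * q X < cum_reward tau r sch' X (K*T) / (real (K*T) / real T)" using N X by auto
    also have "real (K*T) / real T = real K" using T by simp
    finally show ?thesis unfolding A_def cum_frames[OF FL] by simp
  qed
  define d where "d X k = debt S tau r q sch X k" for X k
  define g where "g X k = frame_reward S tau r sch X k" for X k
  define Gm where "Gm X = real T * r X 1" for X
  have dnn: "0 \<le> d X k" for X k unfolding d_def by (rule debt_nonneg)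
  have slot_nn: "\<forall>s. 0 \<le> slot_reward tau r sch X s" if "X \<in> S" for X
  proof
    fix s show "0 \<le> slot_reward tau r sch X s"
      using that taupos nonneg by (intro slot_reward_nonneg) auto
  qed
  have gb: "\<forall>X\<in>S. \<forall>k. 0 \<le> g X k \<and> g X k \<le> Gm X"
  proof (intro ballI allI conjI)
    fix X k assume X: "X \<in> S"
    show "0 \<le> g X k" unfolding g_def frame_reward_def using slot_nn[OF X] by (simp add: sum_nonneg)
    have r1: "0 \<le> r X 1" using nonneg X taupos by (simp add: Suc_le_eq)
    have "g X k \<le> real (card {(k - 1) * T..<k * T}) * r X 1"
      unfolding g_def frame_reward_def FL using slot_reward_le[of tau X r sch] X taupos mono nonneg
      by (intro sum_bounded_above) auto
    also have "\<dots> \<le> real T * r X 1"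
      by (intro mult_right_mono r1) (cases k, auto simp: algebra_simps)
    finally show "g X k \<le> Gm X" unfolding Gm_def .
  qed
  have drift: "\<forall>k. (1+\<delta>) * (\<Sum>X\<in>S. d X k * q X) \<le> (\<Sum>X\<in>S. d X k * g X (Suc k))"
  proof
    fix k
    have "(1+\<delta>) * (\<Sum>X\<in>S. d X k * q X) = (\<Sum>X\<in>S. d X k * ((1+\<delta>) * q X))"
      by (simp add: sum_distrib_left algebra_simps)
    also have "\<dots> \<le> (\<Sum>X\<in>S. d X k * A X)"
      using A dnn by (intro sum_mono mult_left_mono) auto
    also have "\<dots> = (\<Sum>X\<in>S. \<Sum>j<K. d X k * frame_reward S tau r sch' X (Suc j)) / real K"
      unfolding A_def by (simp add: sum_divide_distrib sum_distrib_left)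
    also have "\<dots> = (\<Sum>j<K. \<Sum>X\<in>S. d X k * frame_reward S tau r sch' X (Suc j)) / real K"
      by (subst sum.swap) (rule refl)
    also have "\<dots> \<le> (\<Sum>j<K. \<Sum>X\<in>S. d X k * g X (Suc k)) / real K"
      unfolding d_def g_def
      by (intro divide_right_mono sum_mono frame_opt[OF fin T tauT' FL mono nonneg gm]) auto
    also have "\<dots> = (\<Sum>X\<in>S. d X k * g X (Suc k))" using K by simp
    finally show "(1+\<delta>) * (\<Sum>X\<in>S. d X k * q X) \<le> (\<Sum>X\<in>S. d X k * g X (Suc k))" .
  qed
  obtain E where E: "\<forall>k. \<forall>X\<in>S. d X k \<le> E"
    using debt_bounded[OF fin qpos \<delta>, of d g Gm] drift gb unfolding d_def g_def by auto
  have acc: "real k * q X - d X k \<le> (\<Sum>j<k. g X (Suc j))" for X k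
  proof (induction k)
    case 0 then show ?case unfolding d_def by simp
  next
    case (Suc k)
    have "d X (Suc k) \<ge> d X k + q X - g X (Suc k)" unfolding d_def g_def by simp
    then show ?case using Suc by (simp add: algebra_simps)
  qed
  show "meets_requirements S tau r q sch"
    unfolding meets_requirements_def
  proof
    fix X assume X: "X \<in> S"
    define c where "c = (q X + E) * real T"
    have low: "q X - c / real t \<le> cum_reward tau r sch X t / (real t / real T)" if t: "t > 0" for t
    proof -
      define k where "k = t div T"
      have m1: "cum_reward tau r sch X (k*T) \<le> cum_reward tau r sch X t"
        unfolding k_def by (intro cum_mono slot_nn X) (simp add: div_times_less_eq_dividend)
      have m2: "cum_reward tau r sch X (k*T) = (\<Sum>j<k. g X (Suc j))"
        unfolding g_def by (rule cum_frames[OF FL])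
      have c1: "real k * q X - E \<le> cum_reward tau r sch X t"
      proof -
        have "d X k \<le> E" using E X by blast
        then show ?thesis using acc[of k X] m1 m2 by linarith
      qed
      have "t < k*T + T" unfolding k_def using T
        by (metis add.commute div_mult_mod_eq mod_less_divisor nat_add_left_cancel_less)
      then have "real t < real k * real T + real T" by (metis of_nat_add of_nat_less_iff of_nat_mult)
      then have c2: "real t - real T \<le> real k * real T" by linarith
      have "(q X - c / real t) * real t = q X * real t - (q X + E) * real T"
        using t unfolding c_def by (simp add: field_simps)
      also have "\<dots> \<le> (real k * q X - E) * real T"
      proof -
        have "q X * (real t - real T) \<le> q X * (real k * real T)"
          using c2 qpos X by (intro mult_left_mono) auto
        then show ?thesis by (simp add: algebra_simps)
      qed
      also have "\<dots> \<le> cum_reward tau r sch X t * real T" using c1 T by (simp add: mult_right_mono)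
      finally have "(q X - c / real t) * real t \<le> cum_reward tau r sch X t * real T" .
      then show ?thesis using t T by (simp add: field_simps)
    qed
    have lim: "(\<lambda>t. ereal (q X - c / real t)) \<longlonglongrightarrow> ereal (q X)"
    proof (intro tendsto_ereal)
      have "(\<lambda>t. c * (1 / real t)) \<longlonglongrightarrow> c * 0" by (intro tendsto_mult tendsto_const lim_inverse_n')
      then have "(\<lambda>t. q X - c * (1 / real t)) \<longlonglongrightarrow> q X - c * 0" by (intro tendsto_diff tendsto_const)
      then show "(\<lambda>t. q X - c / real t) \<longlonglongrightarrow> q X" by simp
    qed
    have "ereal (q X) = liminf (\<lambda>t. ereal (q X - c / real t))"
      using lim_imp_Liminf[OF _ lim] by simp
    also have "\<dots> \<le> avg_reward S tau r sch X"
      unfolding avg_reward_def FL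
    proof (intro Liminf_mono)
      show "\<forall>\<^sub>F t in sequentially. ereal (q X - c / real t) \<le> ereal (cum_reward tau r sch X t / (real t / real T))"
        using low unfolding eventually_sequentially by (intro exI[of _ 1]) auto
    qed
    finally show "ereal (q X) \<le> avg_reward S tau r sch X" .
  qed
qed

end
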